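(* Let $G\subset\mathbb R^r$ be a lattice of rank $r$ acting on $C(\mathbb R^r)$ by $f^g(x)=f(x+g)$, and let $A$ be a $G$-invariant vector subspace of $C(\mathbb R^r)$. If $A^G=A\cap C^G$ is finite dimensional, then $P_n^G(A)=A\cap P_n^G$ is finite dimensional for every $n\in\mathbb Z_+$.
   Context: $C(\mathbb R^r)$ is the algebra of continuous (real or complex) functions on $\mathbb R^r$; $x_1,\dots,x_r$ are the standard coordinates. $C^G$ is the set of continuous $G$-periodic functions ($f(x+g)=f(x)$ for all $g\in G$). $P_n^G$ is the space of polynomials in $x_1,\dots,x_r$ of degree at most $n$ with coefficients in $C^G$. $A$ is $G$-invariant if $f\in A$ implies $f(\cdot+g)\in A$ for all $g\in G$. *)

theory Defs
  imports "HOL-Analysis.Analysis"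
begin

text \<open>Points of R^r are vectors of type real^'n with r = CARD('n).
  Scalars 'b are real or complex (class real_normed_field).\<close>

definition full_rank_lattice :: "(real^'n) set \<Rightarrow> bool" where
  "full_rank_lattice G \<longleftrightarrow>
     (\<exists>b :: 'n \<Rightarrow> real^'n. inj b \<and> independent (range b) \<and>
        G = {(\<Sum>i\<in>UNIV. of_int (k i) *\<^sub>R b i) | k :: 'n \<Rightarrow> int. True})"

definition periodic_cont :: "(real^'n) set \<Rightarrow> (real^'n \<Rightarrow> 'b::real_normed_field) set" where
  "periodic_cont G = {f. continuous_on UNIV f \<and> (\<forall>g\<in>G. \<forall>x. f (x + g) = f x)}"

definition poly_periodic :: "nat \<Rightarrow> (real^'n) set \<Rightarrow> (real^'n \<Rightarrow> 'b::real_normed_field) set" where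
  "poly_periodic n G = {f. \<exists>c :: ('n \<Rightarrow> nat) \<Rightarrow> real^'n \<Rightarrow> 'b.
      (\<forall>\<alpha>. c \<alpha> \<in> periodic_cont G) \<and>
      f = (\<lambda>x. \<Sum>\<alpha>\<in>{\<alpha>. sum \<alpha> UNIV \<le> n}. c \<alpha> x * (\<Prod>i\<in>UNIV. of_real (x $ i) ^ \<alpha> i))}"

definition cont_subspace :: "(real^'n \<Rightarrow> 'b::real_normed_field) set \<Rightarrow> bool" where
  "cont_subspace A \<longleftrightarrow> (\<forall>f\<in>A. continuous_on UNIV f) \<and> (\<lambda>x. 0) \<in> A \<and>
     (\<forall>f\<in>A. \<forall>h\<in>A. (\<lambda>x. f x + h x) \<in> A) \<and> (\<forall>c. \<forall>f\<in>A. (\<lambda>x. c * f x) \<in> A)"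

definition G_invariant :: "(real^'n) set \<Rightarrow> (real^'n \<Rightarrow> 'b) set \<Rightarrow> bool" where
  "G_invariant G A \<longleftrightarrow> (\<forall>f\<in>A. \<forall>g\<in>G. (\<lambda>x. f (x + g)) \<in> A)"

definition fun_span :: "('a \<Rightarrow> 'b::field) set \<Rightarrow> ('a \<Rightarrow> 'b) set" where
  "fun_span F = {f. \<exists>S a. finite S \<and> S \<subseteq> F \<and> f = (\<lambda>x. \<Sum>h\<in>S. a h * h x)}"

definition fin_dim :: "('a \<Rightarrow> 'b::field) set \<Rightarrow> bool" where
  "fin_dim S \<longleftrightarrow> (\<exists>F. finite F \<and> F \<subseteq> S \<and> S \<subseteq> fun_span F)"

end

theory Submission
  imports Defs "HOL-Library.Function_Algebras"
begin

definition fsc :: "'b::field \<Rightarrow> ('a \<Rightarrow> 'b) \<Rightarrow> ('a \<Rightarrow> 'b)" where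
  "fsc c f = (\<lambda>x. c * f x)"

interpretation fvs: vector_space "fsc :: 'b::field \<Rightarrow> ('a \<Rightarrow> 'b) \<Rightarrow> ('a \<Rightarrow> 'b)"
  by unfold_locales (auto simp: fsc_def fun_eq_iff algebra_simps)

lemma sum_fun_apply': "(sum f S) x = (\<Sum>a\<in>S. f a x)"
  by (induction S rule: infinite_finite_induct) auto

lemma fun_span_eq: "fun_span F = fvs.span F"
  unfolding fun_span_def fvs.span_explicit
  by (auto simp: fun_eq_iff sum_fun_apply' fsc_def)

lemma fin_dim_iff: "fin_dim S \<longleftrightarrow> (\<exists>F. finite F \<and> F \<subseteq> S \<and> S \<subseteq> fvs.span F)"
  unfolding fin_dim_def fun_span_eq ..

lemma fin_dim_subset:
  assumes "fin_dim S" "U \<subseteq> S"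
  shows "fin_dim (U :: ('a \<Rightarrow> 'b::field) set)"
proof -
  obtain F where F: "finite F" "F \<subseteq> S" "S \<subseteq> fvs.span F" using assms(1) fin_dim_iff by blast
  obtain B where B: "B \<subseteq> U" "fvs.independent B" "U \<subseteq> fvs.span B"
    using fvs.maximal_independent_subset by blast
  have "B \<subseteq> fvs.span F" using B(1) assms(2) F(3) by blast
  then have "finite B" using fvs.independent_span_bound[OF F(1) B(2)] by simp
  then show ?thesis using B fin_dim_iff by blast
qed

lemma fin_dim_linear:
  fixes T :: "('a \<Rightarrow> 'b::field) \<Rightarrow> ('c \<Rightarrow> 'b)"
  assumes lin: "Vector_Spaces.linear fsc fsc T"
    and sub: "fvs.subspace V"
    and TV: "T ` V \<subseteq> W" and W: "fin_dim W"
    and K: "fin_dim {v\<in>V. T v = 0}"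
  shows "fin_dim V"
proof -
  interpret lt: Vector_Spaces.linear fsc fsc T by (fact lin)
  have "fin_dim (T ` V)" using fin_dim_subset[OF W TV] .
  then obtain B where B: "finite B" "B \<subseteq> T ` V" "T ` V \<subseteq> fvs.span B"
    unfolding fin_dim_iff by blast
  obtain C where C: "finite C" "C \<subseteq> {v\<in>V. T v = 0}" "{v\<in>V. T v = 0} \<subseteq> fvs.span C"
    using K unfolding fin_dim_iff by blast
  define g where "g b = (SOME v. v \<in> V \<and> T v = b)" for b
  have g: "g b \<in> V \<and> T (g b) = b" if "b \<in> B" for b
  proof -
    have "\<exists>v. v \<in> V \<and> T v = b" using B(2) that by auto
    then show ?thesis unfolding g_def by (rule someI_ex)
  qed
  define F where "F = g ` B \<union> C"
  have FV: "F \<subseteq> V" using g C(2) unfolding F_def by auto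
  have "V \<subseteq> fvs.span F"
  proof
    fix v assume v: "v \<in> V"
    then have "T v \<in> fvs.span B" using B(3) by blast
    then obtain t r where tr: "finite t" "t \<subseteq> B" "T v = (\<Sum>a\<in>t. fsc (r a) a)"
      unfolding fvs.span_explicit by blast
    define u where "u = (\<Sum>a\<in>t. fsc (r a) (g a))"
    have "g a \<in> fvs.span F" if "a \<in> t" for a
      using that tr(2) unfolding F_def by (intro fvs.span_base) auto
    then have uF: "u \<in> fvs.span F" unfolding u_def
      by (intro fvs.span_sum fvs.span_scale)
    have uV: "u \<in> V" using fvs.span_minimal[OF FV sub] uF by blast
    have "T u = (\<Sum>a\<in>t. fsc (r a) (T (g a)))" unfolding u_def lt.sum lt.scale ..
    also have "\<dots> = T v" unfolding tr(3) using g tr(2)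
      by (intro sum.cong) auto
    finally have "T (v - u) = 0" by (simp add: lt.diff)
    moreover have "v - u \<in> V" using fvs.subspace_diff[OF sub v uV] .
    ultimately have "v - u \<in> fvs.span C" using C(3) by blast
    then have "v - u \<in> fvs.span F" using fvs.span_mono[of C F] unfolding F_def by auto
    then have "(v - u) + u \<in> fvs.span F" using uF by (rule fvs.span_add)
    then show "v \<in> fvs.span F" by simp
  qed
  moreover have "finite F" using B(1) C(1) unfolding F_def by auto
  ultimately show ?thesis using FV unfolding fin_dim_iff by blast
qed

definition mnm :: "('n \<Rightarrow> nat) \<Rightarrow> real^'n \<Rightarrow> 'b::real_normed_field" where
  "mnm \<alpha> x = (\<Prod>i\<in>UNIV. of_real (x $ i) ^ \<alpha> i)"

inductive polyq :: "nat \<Rightarrow> (real^'n \<Rightarrow> 'b::real_normed_field) \<Rightarrow> bool" for n where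
  pz: "polyq n (\<lambda>x. 0)"
| pm: "sum \<alpha> UNIV \<le> n \<Longrightarrow> polyq n (\<lambda>x. c * mnm \<alpha> x)"
| pa: "polyq n p \<Longrightarrow> polyq n q \<Longrightarrow> polyq n (\<lambda>x. p x + q x)"

lemma polyq_scale: "polyq n p \<Longrightarrow> polyq n (\<lambda>x. c * p x)"
proof (induction rule: polyq.induct)
  case pz then show ?case using polyq.pz by simp
next
  case (pm \<alpha> d)
  then show ?case using polyq.pm[of \<alpha> n "c * d"] by (simp add: mult.assoc)
next
  case (pa p q)
  then show ?case using polyq.pa[OF pa.IH] by (simp add: distrib_left)
qed

lemma polyq_mono: "polyq m p \<Longrightarrow> m \<le> n \<Longrightarrow> polyq n p"
  by (induction rule: polyq.induct) (auto intro: polyq.intros)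

lemma mnm_upd: "mnm (\<alpha>(i := Suc (\<alpha> i))) x = of_real (x $ i) * mnm \<alpha> x"
proof -
  have h: "mnm \<alpha> x = of_real (x $ i) ^ \<alpha> i * (\<Prod>j\<in>UNIV - {i}. of_real (x $ j) ^ \<alpha> j)"
    unfolding mnm_def by (subst prod.remove[of _ i]) auto
  have "mnm (\<alpha>(i := Suc (\<alpha> i))) x = of_real (x $ i) ^ Suc (\<alpha> i) *
     (\<Prod>j\<in>UNIV - {i}. of_real (x $ j) ^ (\<alpha>(i := Suc (\<alpha> i))) j)"
    unfolding mnm_def by (subst prod.remove[of _ i]) auto
  also have "(\<Prod>j\<in>UNIV - {i}. of_real (x $ j) ^ (\<alpha>(i := Suc (\<alpha> i))) j) =
       (\<Prod>j\<in>UNIV - {i}. of_real (x $ j) ^ \<alpha> j)"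
    by (intro prod.cong) auto
  also have "of_real (x $ i) ^ Suc (\<alpha> i) * (\<Prod>j\<in>UNIV - {i}. of_real (x $ j) ^ \<alpha> j) =
      of_real (x $ i) * (of_real (x $ i) ^ \<alpha> i * (\<Prod>j\<in>UNIV - {i}. of_real (x $ j) ^ \<alpha> j))"
    by (simp only: power_Suc mult.assoc)
  also have "\<dots> = of_real (x $ i) * mnm \<alpha> x" by (simp only: h)
  finally show ?thesis .
qed

lemma deg_upd: "sum (\<alpha>(i := Suc (\<alpha> i))) (UNIV :: 'n::finite set) = Suc (sum \<alpha> UNIV)"
proof -
  have "sum (\<alpha>(i := Suc (\<alpha> i))) (UNIV :: 'n set) = Suc (\<alpha> i) + sum (\<alpha>(i := Suc (\<alpha> i))) (UNIV - {i})"
    by (subst sum.remove[of _ i]) auto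
  also have "sum (\<alpha>(i := Suc (\<alpha> i))) (UNIV - {i}) = sum \<alpha> (UNIV - {i})"
    by (intro sum.cong) auto
  also have "sum \<alpha> UNIV = \<alpha> i + sum \<alpha> (UNIV - {i})"
    by (subst sum.remove[of _ i]) auto
  ultimately show ?thesis by simp
qed

lemma polyq_xi: "polyq n p \<Longrightarrow> polyq (Suc n) (\<lambda>x. of_real (x $ i) * p x)"
proof (induction rule: polyq.induct)
  case pz then show ?case using polyq.pz by simp
next
  case (pm \<alpha> c)
  have "polyq (Suc n) (\<lambda>x. c * mnm (\<alpha>(i := Suc (\<alpha> i))) x)"
    using pm deg_upd[of \<alpha> i] by (intro polyq.pm) simp
  then show ?case by (simp add: mnm_upd mult.left_commute)
next
  case (pa p q)
  then show ?case using polyq.pa[OF pa.IH] by (simp add: distrib_left)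
qed

lemma mnm_zero: "sum \<alpha> (UNIV :: 'n::finite set) = 0 \<Longrightarrow> mnm \<alpha> x = 1"
  unfolding mnm_def by simp

lemma shift_key:
  fixes g :: "real^'n"
  shows "sum \<alpha> UNIV = d \<Longrightarrow>
    polyq (d - 1) (\<lambda>x. mnm \<alpha> (x + g) - (mnm \<alpha> x :: 'b::real_normed_field)) \<and>
    (d = 0 \<longrightarrow> (\<forall>x. mnm \<alpha> (x + g) - (mnm \<alpha> x :: 'b) = 0)) \<and>
    polyq d (\<lambda>x. mnm \<alpha> (x + g) :: 'b)"
proof (induction d arbitrary: \<alpha>)
  case 0
  have "polyq 0 (\<lambda>x. 1 * (mnm \<alpha> x :: 'b))" using 0 by (intro polyq.pm) simp
  then have "polyq 0 (\<lambda>x. mnm \<alpha> (x + g) :: 'b)" using 0 by (simp add: mnm_zero)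
  moreover have "(\<lambda>x. mnm \<alpha> (x + g) - (mnm \<alpha> x :: 'b)) = (\<lambda>x. 0)"
    using 0 by (simp add: mnm_zero)
  ultimately show ?case using polyq.pz 0 by (simp add: mnm_zero)
next
  case (Suc d)
  obtain i where i: "\<alpha> i > 0"
    using Suc.prems by (metis Zero_not_Suc gr0I sum.neutral)
  define \<beta> where "\<beta> = \<alpha>(i := \<alpha> i - 1)"
  have \<alpha>\<beta>: "\<alpha> = \<beta>(i := Suc (\<beta> i))" using i unfolding \<beta>_def by auto
  have d\<beta>: "sum \<beta> UNIV = d" using Suc.prems deg_upd[of \<beta> i] \<alpha>\<beta> by simp
  note IH = Suc.IH[OF d\<beta>]
  have eq: "mnm \<alpha> (x + g) - (mnm \<alpha> x :: 'b) =
     of_real (x $ i) * (mnm \<beta> (x + g) - mnm \<beta> x) + of_real (g $ i) * mnm \<beta> (x + g)" for x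
    unfolding \<alpha>\<beta> mnm_upd by (simp add: algebra_simps)
  have t1: "polyq d (\<lambda>x. of_real (x $ i) * (mnm \<beta> (x + g) - (mnm \<beta> x :: 'b)))"
  proof (cases "d = 0")
    case True
    then show ?thesis using IH polyq.pz by simp
  next
    case False
    then show ?thesis using polyq_xi[OF conjunct1[OF IH], of i] by simp
  qed
  have t2: "polyq d (\<lambda>x. of_real (g $ i) * (mnm \<beta> (x + g) :: 'b))"
    using IH by (intro polyq_scale) simp
  have diff: "polyq d (\<lambda>x. mnm \<alpha> (x + g) - (mnm \<alpha> x :: 'b))"
    unfolding eq using polyq.pa[OF t1 t2] .
  have "polyq (Suc d) (\<lambda>x. 1 * (mnm \<alpha> x :: 'b))" using Suc.prems by (intro polyq.pm) simp
  then have m1: "polyq (Suc d) (\<lambda>x. mnm \<alpha> x :: 'b)" by simp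
  have "polyq (Suc d) (\<lambda>x. (mnm \<alpha> (x + g) - (mnm \<alpha> x :: 'b)) + mnm \<alpha> x)"
    using polyq.pa[OF polyq_mono[OF diff, of "Suc d"] m1] by simp
  then show ?case using diff by simp
qed

lemma pc_zero: "(\<lambda>x. 0) \<in> periodic_cont G"
  unfolding periodic_cont_def by auto

lemma pc_scale: "c \<in> periodic_cont G \<Longrightarrow> (\<lambda>x. d * c x) \<in> periodic_cont G"
  unfolding periodic_cont_def by (auto intro!: continuous_intros)

lemma pc_add: "c \<in> periodic_cont G \<Longrightarrow> e \<in> periodic_cont G \<Longrightarrow> (\<lambda>x. c x + e x) \<in> periodic_cont G"
  unfolding periodic_cont_def by (auto intro!: continuous_intros)

lemma finite_deg: "finite {\<alpha> :: 'n::finite \<Rightarrow> nat. sum \<alpha> UNIV \<le> n}"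
proof -
  have "{\<alpha> :: 'n \<Rightarrow> nat. sum \<alpha> UNIV \<le> n} \<subseteq> PiE UNIV (\<lambda>_. {..n})"
  proof
    fix \<alpha> :: "'n \<Rightarrow> nat" assume "\<alpha> \<in> {\<alpha>. sum \<alpha> UNIV \<le> n}"
    then have "\<alpha> i \<le> n" for i using member_le_sum[of i UNIV \<alpha>] by auto
    then show "\<alpha> \<in> PiE UNIV (\<lambda>_. {..n})" by auto
  qed
  then show ?thesis by (rule finite_subset) (intro finite_PiE, auto)
qed

lemma P_zero: "(\<lambda>x. 0) \<in> poly_periodic n G"
  unfolding poly_periodic_def
  by (rule CollectI, rule exI[of _ "\<lambda>_ _. 0"]) (auto simp: pc_zero)

lemma P_add:
  assumes "f \<in> poly_periodic n G" "h \<in> poly_periodic n G"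
  shows "(\<lambda>x. f x + h x) \<in> poly_periodic n G"
proof -
  obtain c where c: "\<forall>\<alpha>. c \<alpha> \<in> periodic_cont G"
    "f = (\<lambda>x. \<Sum>\<alpha>\<in>{\<alpha>. sum \<alpha> UNIV \<le> n}. c \<alpha> x * (\<Prod>i\<in>UNIV. of_real (x $ i) ^ \<alpha> i))"
    using assms(1) unfolding poly_periodic_def by blast
  obtain e where e: "\<forall>\<alpha>. e \<alpha> \<in> periodic_cont G"
    "h = (\<lambda>x. \<Sum>\<alpha>\<in>{\<alpha>. sum \<alpha> UNIV \<le> n}. e \<alpha> x * (\<Prod>i\<in>UNIV. of_real (x $ i) ^ \<alpha> i))"
    using assms(2) unfolding poly_periodic_def by blast
  show ?thesis unfolding poly_periodic_def
    apply (rule CollectI, rule exI[of _ "\<lambda>\<alpha> x. c \<alpha> x + e \<alpha> x"])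
    using c e by (auto simp: pc_add distrib_right sum.distrib)
qed

lemma P_scale:
  assumes "f \<in> poly_periodic n G"
  shows "(\<lambda>x. d * f x) \<in> poly_periodic n G"
proof -
  obtain c where c: "\<forall>\<alpha>. c \<alpha> \<in> periodic_cont G"
    "f = (\<lambda>x. \<Sum>\<alpha>\<in>{\<alpha>. sum \<alpha> UNIV \<le> n}. c \<alpha> x * (\<Prod>i\<in>UNIV. of_real (x $ i) ^ \<alpha> i))"
    using assms(1) unfolding poly_periodic_def by blast
  show ?thesis unfolding poly_periodic_def
    apply (rule CollectI, rule exI[of _ "\<lambda>\<alpha> x. d * c \<alpha> x"])
    using c by (auto simp: pc_scale sum_distrib_left mult.assoc)
qed

lemma P_sum:
  assumes "finite S" "\<And>a. a \<in> S \<Longrightarrow> h a \<in> poly_periodic n G"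
  shows "(\<lambda>x. \<Sum>a\<in>S. h a x) \<in> poly_periodic n G"
  using assms
proof (induction S rule: finite_induct)
  case empty then show ?case using P_zero by simp
next
  case (insert a S)
  then show ?case using P_add[of "h a" n G "\<lambda>x. \<Sum>a\<in>S. h a x"] by simp
qed

lemma P_mon:
  assumes "c \<in> periodic_cont G" "sum \<alpha> UNIV \<le> n"
  shows "(\<lambda>x. c x * mnm \<alpha> x) \<in> poly_periodic n G"
proof -
  have "(\<lambda>x. c x * mnm \<alpha> x) = (\<lambda>x. \<Sum>\<beta>\<in>{\<alpha>. sum \<alpha> UNIV \<le> n}.
      (if \<beta> = \<alpha> then c else (\<lambda>x. 0)) x * (\<Prod>i\<in>UNIV. of_real (x $ i) ^ \<beta> i))"
  proof
    fix x
    have "(\<Sum>\<beta>\<in>{\<alpha>. sum \<alpha> UNIV \<le> n}.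
      (if \<beta> = \<alpha> then c else (\<lambda>x. 0)) x * (\<Prod>i\<in>UNIV. of_real (x $ i) ^ \<beta> i)) =
      (\<Sum>\<beta>\<in>{\<alpha>. sum \<alpha> UNIV \<le> n}. if \<beta> = \<alpha> then c x * mnm \<alpha> x else 0)"
      by (intro sum.cong) (auto simp: mnm_def)
    also have "\<dots> = c x * mnm \<alpha> x"
      using sum.delta[OF finite_deg[of n], of \<alpha> "\<lambda>_. c x * mnm \<alpha> x"] assms(2) by simp
    finally show "c x * mnm \<alpha> x = (\<Sum>\<beta>\<in>{\<alpha>. sum \<alpha> UNIV \<le> n}.
      (if \<beta> = \<alpha> then c else (\<lambda>x. 0)) x * (\<Prod>i\<in>UNIV. of_real (x $ i) ^ \<beta> i))" ..
  qed
  then show ?thesis unfolding poly_periodic_def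
    using assms(1) pc_zero by (intro CollectI exI[of _ "\<lambda>\<beta>. if \<beta> = \<alpha> then c else (\<lambda>x. 0)"]) auto
qed

lemma P_coeff:
  "polyq m q \<Longrightarrow> c \<in> periodic_cont G \<Longrightarrow> (\<lambda>x. c x * q x) \<in> poly_periodic m G"
proof (induction arbitrary: c rule: polyq.induct)
  case pz then show ?case using P_zero by simp
next
  case (pm \<alpha> d)
  have "(\<lambda>x. (d * c x) * mnm \<alpha> x) \<in> poly_periodic m G"
    using pm by (intro P_mon pc_scale)
  then show ?case by (simp add: mult.left_commute mult.assoc)
next
  case (pa p q)
  then show ?case using P_add[OF pa.IH] by (simp add: distrib_left)
qed

lemma P_delta:
  assumes f: "f \<in> poly_periodic n G" and g: "g \<in> G"
  shows "(\<lambda>x. f (x + g) - f x) \<in> poly_periodic (n - 1) G \<and>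
         (n = 0 \<longrightarrow> (\<lambda>x. f (x + g) - f x) = (\<lambda>x. 0))"
proof -
  obtain c where c: "\<forall>\<alpha>. c \<alpha> \<in> periodic_cont G"
    "f = (\<lambda>x. \<Sum>\<alpha>\<in>{\<alpha>. sum \<alpha> UNIV \<le> n}. c \<alpha> x * mnm \<alpha> x)"
    using f unfolding poly_periodic_def mnm_def by blast
  have per: "c \<alpha> (x + g) = c \<alpha> x" for \<alpha> x
    using c(1) g unfolding periodic_cont_def by blast
  have eq: "(\<lambda>x. f (x + g) - f x) =
     (\<lambda>x. \<Sum>\<alpha>\<in>{\<alpha>. sum \<alpha> UNIV \<le> n}. c \<alpha> x * (mnm \<alpha> (x + g) - mnm \<alpha> x))"
    unfolding c(2) by (auto simp: per sum_subtractf right_diff_distrib)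
  have "(\<lambda>x. \<Sum>\<alpha>\<in>{\<alpha>. sum \<alpha> UNIV \<le> n}. c \<alpha> x * (mnm \<alpha> (x + g) - mnm \<alpha> x))
     \<in> poly_periodic (n - 1) G"
  proof (intro P_sum finite_deg)
    fix \<alpha> assume "\<alpha> \<in> {\<alpha> :: 'a \<Rightarrow> nat. sum \<alpha> UNIV \<le> n}"
    then have "sum \<alpha> UNIV - 1 \<le> n - 1" by auto
    then have "polyq (n - 1) (\<lambda>x. mnm \<alpha> (x + g) - (mnm \<alpha> x :: 'b))"
      using shift_key[of \<alpha> "sum \<alpha> UNIV" g] polyq_mono by blast
    then show "(\<lambda>x. c \<alpha> x * (mnm \<alpha> (x + g) - mnm \<alpha> x)) \<in> poly_periodic (n - 1) G"
      using c(1) by (intro P_coeff) auto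
  qed
  moreover have "(\<lambda>x. \<Sum>\<alpha>\<in>{\<alpha>. sum \<alpha> UNIV \<le> n}. c \<alpha> x * (mnm \<alpha> (x + g) - mnm \<alpha> x)) = (\<lambda>x. 0)"
    if "n = 0"
  proof -
    have "mnm \<alpha> (x + g) - (mnm \<alpha> x :: 'b) = 0" if "\<alpha> \<in> {\<alpha> :: 'a \<Rightarrow> nat. sum \<alpha> UNIV \<le> n}" for \<alpha> x
      using that \<open>n = 0\<close> shift_key[of \<alpha> 0 g] by auto
    then show ?thesis by (auto intro!: sum.neutral)
  qed
  ultimately show ?thesis unfolding eq by blast
qed

lemma int_mult_periodic:
  fixes f :: "'a::real_vector \<Rightarrow> 'c"
  assumes "\<forall>x. f (x + v) = f x"
  shows "f (x + of_int m *\<^sub>R v) = f x"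
proof -
  have nat: "f (y + of_nat k *\<^sub>R v) = f y" for y k
  proof (induction k)
    case 0 then show ?case by simp
  next
    case (Suc k)
    have "f (y + of_nat (Suc k) *\<^sub>R v) = f ((y + of_nat k *\<^sub>R v) + v)"
      by (simp add: algebra_simps)
    also have "\<dots> = f (y + of_nat k *\<^sub>R v)" using assms by blast
    finally show ?case using Suc by simp
  qed
  show ?thesis
  proof (cases "m \<ge> 0")
    case True
    define k where "k = nat m"
    have "m = int k" using True unfolding k_def by simp
    then show ?thesis using nat[of x k] by simp
  next
    case False
    define k where "k = nat (- m)"
    have k: "m = - int k" using False unfolding k_def by simp
    have "f (x + of_int m *\<^sub>R v) = f ((x + of_int m *\<^sub>R v) + of_nat k *\<^sub>R v)"
      using nat[of "x + of_int m *\<^sub>R v" k] by simp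
    also have "\<dots> = f x" using k by (simp add: algebra_simps)
    finally show ?thesis .
  qed
qed

lemma lattice_periodic:
  fixes f :: "'a::real_vector \<Rightarrow> 'c"
  assumes "\<forall>j x. f (x + b j) = f x" "finite S"
  shows "f (x + (\<Sum>i\<in>S. of_int (k i) *\<^sub>R b i)) = f x"
  using assms(2)
proof (induction S arbitrary: x rule: finite_induct)
  case empty then show ?case by simp
next
  case (insert i S)
  have "f (x + (\<Sum>i\<in>insert i S. of_int (k i) *\<^sub>R b i)) =
        f ((x + (\<Sum>i\<in>S. of_int (k i) *\<^sub>R b i)) + of_int (k i) *\<^sub>R b i)"
    using insert by (simp add: algebra_simps)
  also have "\<dots> = f (x + (\<Sum>i\<in>S. of_int (k i) *\<^sub>R b i))"
    using int_mult_periodic[of f "b i" _ "k i"] assms(1) by blast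
  finally show ?case using insert by simp
qed

theorem theorem3p3:
  fixes G :: "(real^'n) set" and A :: "(real^'n \<Rightarrow> 'b::real_normed_field) set"
  assumes "full_rank_lattice G"
    and "cont_subspace A"
    and "G_invariant G A"
    and "fin_dim (A \<inter> periodic_cont G)"
  shows "\<forall>n::nat. fin_dim (A \<inter> poly_periodic n G)"
proof -
  obtain b :: "'n \<Rightarrow> real^'n" where Gb: "G = {(\<Sum>i\<in>UNIV. of_int (k i) *\<^sub>R b i) | k :: 'n \<Rightarrow> int. True}"
    using assms(1) unfolding full_rank_lattice_def by blast
  have bG: "b i \<in> G" for i
  proof -
    have "(\<Sum>j\<in>UNIV. of_int (if j = i then 1 else 0) *\<^sub>R b j) = b i"
    proof -
      have "(\<Sum>j\<in>UNIV. of_int (if j = i then 1 else 0) *\<^sub>R b j) = (\<Sum>j\<in>UNIV. if j = i then b j else 0)"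
        by (intro sum.cong) auto
      then show ?thesis by simp
    qed
    then show ?thesis unfolding Gb by (intro CollectI exI[of _ "\<lambda>j. if j = i then 1 else 0"]) auto
  qed
  have Acont: "\<forall>f\<in>A. continuous_on UNIV f" and A0: "(\<lambda>x. 0) \<in> A"
    and Aadd: "\<forall>f\<in>A. \<forall>h\<in>A. (\<lambda>x. f x + h x) \<in> A" and Asc: "\<forall>c. \<forall>f\<in>A. (\<lambda>x. c * f x) \<in> A"
    using assms(2) unfolding cont_subspace_def by auto
  define D where "D i f = (\<lambda>x. f (x + b i) - f x)" for i and f :: "real^'n \<Rightarrow> 'b"
  have lin: "Vector_Spaces.linear fsc fsc (D i)" for i
    by unfold_locales (auto simp: D_def fsc_def fun_eq_iff algebra_simps)
  have DA: "D i f \<in> A" if "f \<in> A" for i f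
  proof -
    have h1: "(\<lambda>x. f (x + b i)) \<in> A" using assms(3) bG that unfolding G_invariant_def by blast
    have h2: "(\<lambda>x. (-1) * f x) \<in> A" using Asc that by blast
    have "(\<lambda>x. f (x + b i) + (-1) * f x) \<in> A" using Aadd[rule_format, OF h1 h2] by simp
    then show ?thesis unfolding D_def by simp
  qed
  have step: "fin_dim (A \<inter> poly_periodic n G)"
    if W: "fin_dim W" and DW: "\<forall>f\<in>A \<inter> poly_periodic n G. \<forall>i. D i f \<in> W" for n W
  proof -
    define V where "V = A \<inter> poly_periodic n G"
    define VS where "VS S = {f\<in>V. \<forall>j. j \<notin> S \<longrightarrow> (\<forall>x. f (x + b j) = f x)}" for S
    have subV: "fvs.subspace V"
      unfolding fvs.subspace_def V_def
      using A0 Aadd Asc P_zero P_add P_scale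
      by (auto simp: zero_fun_def plus_fun_def fsc_def)
    have subVS: "fvs.subspace (VS S)" for S
      using subV unfolding fvs.subspace_def VS_def
      by (auto simp: zero_fun_def plus_fun_def fsc_def)
    have "fin_dim (VS S)" if "finite S" for S
      using that
    proof (induction S rule: finite_induct)
      case empty
      have "VS {} \<subseteq> A \<inter> periodic_cont G"
      proof
        fix f assume f: "f \<in> VS {}"
        then have fA: "f \<in> A" and per: "\<forall>j x. f (x + b j) = f x"
          unfolding VS_def V_def by auto
        have "\<forall>g\<in>G. \<forall>x. f (x + g) = f x"
          unfolding Gb using lattice_periodic[OF per] by auto
        then show "f \<in> A \<inter> periodic_cont G"
          using fA Acont unfolding periodic_cont_def by auto
      qed
      then show ?case using fin_dim_subset assms(4) by blast
    next
      case (insert i S)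
      have ker: "{v \<in> VS (insert i S). D i v = 0} = VS S"
        unfolding VS_def D_def using insert(2) by (auto simp: fun_eq_iff)
      have "D i ` VS (insert i S) \<subseteq> W" using DW unfolding VS_def V_def by auto
      then show ?case
        using fin_dim_linear[OF lin subVS _ W] ker insert(3) by simp
    qed
    moreover have "VS UNIV = V" unfolding VS_def by auto
    ultimately show ?thesis unfolding V_def by (metis finite)
  qed
  show ?thesis
  proof
    fix n show "fin_dim (A \<inter> poly_periodic n G)"
    proof (induction n)
      case 0
      have "fin_dim {(\<lambda>x. 0) :: real^'n \<Rightarrow> 'b}"
        unfolding fin_dim_def fun_span_def by (intro exI[of _ "{}"]) auto
      moreover have "\<forall>f\<in>A \<inter> poly_periodic 0 G. \<forall>i. D i f \<in> {(\<lambda>x. 0)}"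
        using P_delta bG unfolding D_def by blast
      ultimately show ?case by (rule step)
    next
      case (Suc m)
      have "\<forall>f\<in>A \<inter> poly_periodic (Suc m) G. \<forall>i. D i f \<in> A \<inter> poly_periodic m G"
        using P_delta[of _ "Suc m" G] bG DA unfolding D_def by auto
      with Suc show ?case by (rule step)
    qed
  qed
qed

end
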